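(* Let $N\ge1$ and let $\tilde\Phi:\mathbb{R}^N\to\mathbb{R}$ be a twice differentiable convex function with $\nabla\tilde\Phi(G)\in\Delta_N$ and $\nabla_i\tilde\Phi(G)>0$ for all $G$ and $i$. Suppose that for constants $C,\gamma>0$, $\tilde\Phi$ is $(\gamma,C)$-differentially-consistent, i.e. for all $G\in(-\infty,0]^N$ and all $i$, $\nabla^2_{ii}\tilde\Phi(G)\le C(\nabla_i\tilde\Phi(G))^\gamma$. Consider one round $t$ of GBPA$(\tilde\Phi)$ with loss vector $g_t\in[-1,0]^N$ and current estimate $\hat G_{t-1}\in(-\infty,0]^N$. Then \[\mathbb{E}_{i_t}\big[D_{\tilde\Phi}(\hat G_t,\hat G_{t-1})\,\big|\,\hat G_{t-1}\big]\le\frac{C}{2}\sum_{i=1}^N\big(\nabla_i\tilde\Phi(\hat G_{t-1})\big)^{\gamma-1}.\]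
   Context: $\Delta_N$ is the probability simplex in $\mathbb{R}^N$, $e_i$ the $i$-th standard basis vector. One round of GBPA$(\tilde\Phi)$ at time $t$: given $\hat G_{t-1}$, sample $i_t$ with probability $p_{t,i}=\nabla_i\tilde\Phi(\hat G_{t-1})$, observe $g_{t,i_t}$, set $\hat G_t=\hat G_{t-1}+\frac{g_{t,i_t}}{p_{t,i_t}}e_{i_t}$ (the algorithm starts from $\hat G_0=0$, so all $\hat G_t$ lie in $(-\infty,0]^N$). $D_{\tilde\Phi}(x,y)=\tilde\Phi(x)-\tilde\Phi(y)-\langle\nabla\tilde\Phi(y),x-y\rangle$ is the Bregman divergence; $\nabla_i$ and $\nabla^2_{ii}$ denote first and second partial derivatives in coordinate $i$. *)

theory Defs
  imports "HOL-Analysis.Analysis"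
begin

definition bregman :: "(real^'n::finite \<Rightarrow> real) \<Rightarrow> (real^'n \<Rightarrow> real^'n) \<Rightarrow> real^'n \<Rightarrow> real^'n \<Rightarrow> real"
  where "bregman Phi grad x y = Phi x - Phi y - inner (grad y) (x - y)"

definition gbpa_update :: "(real^'n \<Rightarrow> real^'n) \<Rightarrow> real^'n \<Rightarrow> real^'n \<Rightarrow> 'n::finite \<Rightarrow> real^'n"
  where "gbpa_update grad G g i = G + (g $ i / grad G $ i) *\<^sub>R axis i 1"

end

theory Submission imports Defs begin
lemma line_derivs:
  fixes Phi :: "real^'n::finite \<Rightarrow> real" and grad :: "real^'n \<Rightarrow> real^'n"
  assumes grad_deriv: "\<And>x. (Phi has_derivative (\<lambda>h. inner (grad x) h)) (at x)"
    and hess_deriv: "\<And>x. (grad has_derivative hess x) (at x)"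
  shows "((\<lambda>s. Phi (G + s *\<^sub>R axis i 1)) has_real_derivative grad (G + s *\<^sub>R axis i 1) $ i) (at s)"
    and "((\<lambda>s. grad (G + s *\<^sub>R axis i 1) $ i) has_real_derivative hess (G + s *\<^sub>R axis i 1) (axis i 1) $ i) (at s)"
proof -
  have L: "((\<lambda>s. G + s *\<^sub>R axis i (1::real)) has_derivative (\<lambda>t. t *\<^sub>R axis i 1)) (at s)"
    by (auto intro!: derivative_eq_intros)
  have "((\<lambda>s. Phi (G + s *\<^sub>R axis i 1)) has_derivative (\<lambda>t. inner (grad (G + s *\<^sub>R axis i 1)) (t *\<^sub>R axis i 1))) (at s)"
    using has_derivative_compose[OF L grad_deriv] by simp
  then show "((\<lambda>s. Phi (G + s *\<^sub>R axis i 1)) has_real_derivative grad (G + s *\<^sub>R axis i 1) $ i) (at s)"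
    by (simp add: has_field_derivative_def inner_axis mult.commute[of _ "grad _ $ i"])
  have H: "((\<lambda>s. grad (G + s *\<^sub>R axis i 1)) has_derivative (\<lambda>t. hess (G + s *\<^sub>R axis i 1) (t *\<^sub>R axis i 1))) (at s)"
    using has_derivative_compose[OF L hess_deriv] by simp
  have lin: "linear (hess (G + s *\<^sub>R axis i 1))"
    using hess_deriv has_derivative_linear by blast
  have "((\<lambda>s. grad (G + s *\<^sub>R axis i 1) $ i) has_derivative (\<lambda>t. hess (G + s *\<^sub>R axis i 1) (t *\<^sub>R axis i 1) $ i)) (at s)"
    using bounded_linear.has_derivative[OF bounded_linear_vec_nth H] .
  then show "((\<lambda>s. grad (G + s *\<^sub>R axis i 1) $ i) has_real_derivative hess (G + s *\<^sub>R axis i 1) (axis i 1) $ i) (at s)"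
    by (simp add: has_field_derivative_def linear_scale[OF lin] mult.commute[of _ "hess _ _ $ i"])
qed

lemma convex_line:
  fixes Phi :: "real^'n::finite \<Rightarrow> real"
  assumes "convex_on UNIV Phi"
  shows "convex_on UNIV (\<lambda>s. Phi (G + s *\<^sub>R axis i 1))"
proof (rule convex_onI, simp add: convex_UNIV)
  fix t x y :: real assume t: "0 < t" "t < 1"
  have "G + ((1 - t) * x + t * y) *\<^sub>R axis i 1 = (1-t) *\<^sub>R (G + x *\<^sub>R axis i 1) + t *\<^sub>R (G + y *\<^sub>R axis i 1)"
    by (simp add: algebra_simps scaleR_add_left)
  then show "Phi (G + ((1 - t) * x + t * y) *\<^sub>R axis i 1) \<le> (1 - t) * Phi (G + x *\<^sub>R axis i 1) + t * Phi (G + y *\<^sub>R axis i 1)"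
    using convex_onD[OF assms, of t "G + x *\<^sub>R axis i 1" "G + y *\<^sub>R axis i 1"] t by simp
qed (simp add: convex_UNIV)

lemma taylor1:
  fixes f f' f'' :: "real \<Rightarrow> real"
  assumes d1: "\<And>s. (f has_real_derivative f' s) (at s)"
    and d2: "\<And>s. (f' has_real_derivative f'' s) (at s)"
    and h: "h \<le> 0" and bd: "\<And>s. h \<le> s \<Longrightarrow> s \<le> 0 \<Longrightarrow> f'' s \<le> K"
  shows "f h - f 0 - f' 0 * h \<le> K * h^2 / 2"
proof -
  have p1: "f' s - f' 0 - K * s \<ge> 0" if "h \<le> s" "s \<le> 0" for s
  proof -
    have "f' s - f' 0 - K * s \<ge> f' 0 - f' 0 - K * 0"
      by (rule DERIV_nonpos_imp_nonincreasing[OF \<open>s \<le> 0\<close>, where f = "\<lambda>s. f' s - f' 0 - K * s"])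
         (use that bd in \<open>auto intro!: derivative_eq_intros d2\<close>)
    then show ?thesis by simp
  qed
  have "f h - f 0 - f' 0 * h - K * h^2/2 \<le> f 0 - f 0 - f' 0 * 0 - K * 0^2/2"
  proof (rule DERIV_nonneg_imp_nondecreasing[OF h, where f = "\<lambda>s. f s - f 0 - f' 0 * s - K * s^2/2"])
    fix x assume x: "h \<le> x" "x \<le> 0"
    show "\<exists>y. ((\<lambda>s. f s - f 0 - f' 0 * s - K * s^2/2) has_real_derivative y) (at x) \<and> 0 \<le> y"
      by (rule exI[of _ "f' x - f' 0 - K * x"], rule conjI, (rule derivative_eq_intros d1 refl)+)
         (use p1[OF x] in auto)
  qed
  then show ?thesis by simp
qed

lemma convex_deriv_mono:
  fixes f f' :: "real \<Rightarrow> real"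
  assumes c: "convex_on UNIV f" and d1: "\<And>s. (f has_real_derivative f' s) (at s)"
    and "s \<le> 0"
  shows "f' s \<le> f' 0"
proof -
  have a: "f 0 - f s \<ge> f' s * (0 - s)"
    by (rule convex_on_imp_above_tangent[OF c]) (auto simp: d1)
  have b: "f s - f 0 \<ge> f' 0 * (s - 0)"
    by (rule convex_on_imp_above_tangent[OF c]) (auto simp: d1)
  from a b have "s * (f' 0 - f' s) \<le> 0" by (simp add: algebra_simps)
  then show ?thesis using \<open>s \<le> 0\<close>
    by (cases "s = 0") (auto simp: mult_le_0_iff)
qed

theorem theorem1:
  fixes Phi :: "real^'n::finite \<Rightarrow> real"
    and grad :: "real^'n \<Rightarrow> real^'n"
    and hess :: "real^'n \<Rightarrow> real^'n \<Rightarrow> real^'n"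
    and C \<gamma> :: real
    and g Ghat :: "real^'n"
  assumes grad_deriv: "\<And>x. (Phi has_derivative (\<lambda>h. inner (grad x) h)) (at x)"
    and hess_deriv: "\<And>x. (grad has_derivative hess x) (at x)"
    and convex: "convex_on UNIV Phi"
    and grad_pos: "\<And>G i. grad G $ i > 0"
    and grad_simplex: "\<And>G. (\<Sum>i\<in>UNIV. grad G $ i) = 1"
    and C_pos: "C > 0" and gamma_pos: "\<gamma> > 0"
    and diff_consistent: "\<And>G i. (\<forall>j. G $ j \<le> 0) \<Longrightarrow>
            hess G (axis i 1) $ i \<le> C * (grad G $ i) powr \<gamma>"
    and g_range: "\<And>i. -1 \<le> g $ i \<and> g $ i \<le> 0"
    and Ghat_nonpos: "\<And>i. Ghat $ i \<le> 0"
  shows "(\<Sum>i\<in>UNIV. grad Ghat $ i * bregman Phi grad (gbpa_update grad Ghat g i) Ghat)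
           \<le> C / 2 * (\<Sum>i\<in>UNIV. (grad Ghat $ i) powr (\<gamma> - 1))"
proof -
  have each: "grad Ghat $ i * bregman Phi grad (gbpa_update grad Ghat g i) Ghat
      \<le> C / 2 * (grad Ghat $ i) powr (\<gamma> - 1)" for i
  proof -
    define p where "p = grad Ghat $ i"
    define h where "h = g $ i / p"
    define K where "K = C * p powr \<gamma>"
    define f where "f = (\<lambda>s. Phi (Ghat + s *\<^sub>R axis i 1))"
    define f' where "f' = (\<lambda>s. grad (Ghat + s *\<^sub>R axis i 1) $ i)"
    define f'' where "f'' = (\<lambda>s. hess (Ghat + s *\<^sub>R axis i 1) (axis i 1) $ i)"
    have pp: "p > 0" unfolding p_def by (rule grad_pos)
    have gi: "-1 \<le> g $ i" "g $ i \<le> 0" using g_range by auto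
    have h0: "h \<le> 0" unfolding h_def using pp gi by (simp add: divide_nonpos_pos)
    have d1: "\<And>s. (f has_real_derivative f' s) (at s)"
      unfolding f_def f'_def by (rule line_derivs(1)[OF grad_deriv hess_deriv])
    have d2: "\<And>s. (f' has_real_derivative f'' s) (at s)"
      unfolding f'_def f''_def by (rule line_derivs(2)[OF grad_deriv hess_deriv])
    have cf: "convex_on UNIV f" unfolding f_def by (rule convex_line[OF convex])
    have f'0: "f' 0 = p" unfolding f'_def p_def by simp
    have bd: "f'' s \<le> K" if "h \<le> s" "s \<le> 0" for s
    proof -
      have np: "\<forall>j. (Ghat + s *\<^sub>R axis i 1) $ j \<le> 0"
        proof
        fix j show "(Ghat + s *\<^sub>R axis i 1) $ j \<le> 0"
          using Ghat_nonpos[of j] that by (auto simp: axis_def add_nonpos_nonpos)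
      qed
      have "f'' s \<le> C * (f' s) powr \<gamma>"
        unfolding f''_def f'_def by (rule diff_consistent[OF np])
      also have "\<dots> \<le> C * p powr \<gamma>"
        using convex_deriv_mono[OF cf d1 \<open>s \<le> 0\<close>] f'0 C_pos gamma_pos
        by (intro mult_left_mono powr_mono2) (auto simp: f'_def less_imp_le[OF grad_pos])
      finally show ?thesis unfolding K_def .
    qed
    have T: "f h - f 0 - f' 0 * h \<le> K * h^2 / 2"
      by (rule taylor1[OF d1 d2 h0 bd])
    have br: "bregman Phi grad (gbpa_update grad Ghat g i) Ghat = f h - f 0 - f' 0 * h"
      unfolding bregman_def gbpa_update_def f_def f'0 h_def p_def
      by (simp add: inner_axis)
    have "p * (f h - f 0 - f' 0 * h) \<le> p * (K * h^2 / 2)"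
      using T pp by (intro mult_left_mono) auto
    also have "\<dots> = C / 2 * (p powr \<gamma> / p) * (g $ i)^2"
      unfolding K_def h_def using pp by (simp add: field_simps power2_eq_square)
    also have "\<dots> \<le> C / 2 * (p powr \<gamma> / p) * 1"
    proof (rule mult_left_mono)
      show "(g $ i)^2 \<le> 1" using gi by (simp add: abs_le_iff abs_square_le_1)
    qed (use C_pos pp in auto)
    also have "\<dots> = C / 2 * p powr (\<gamma> - 1)"
      using pp by (simp add: powr_diff)
    finally show ?thesis using br unfolding p_def by simp
  qed
  have "(\<Sum>i\<in>UNIV. grad Ghat $ i * bregman Phi grad (gbpa_update grad Ghat g i) Ghat)
      \<le> (\<Sum>i\<in>UNIV. C / 2 * (grad Ghat $ i) powr (\<gamma> - 1))"
    by (rule sum_mono) (rule each)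
  also have "\<dots> = C / 2 * (\<Sum>i\<in>UNIV. (grad Ghat $ i) powr (\<gamma> - 1))"
    by (simp add: sum_distrib_left)
  finally show ?thesis .
qed

end
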